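(* Let $k\ge1$ and $n\ge1$ be integers. Then $$\sum_{j=0}^{n-1}\binom{n+k-2}{n-j-1}x^{k+j}F^{(k)}_{(k-1)j}(x)=xF^{(k)}_{kn-1}(x)=\sum_{j=0}^{n}\binom{n-1}{n-j}x^{j}F^{(k)}_{(k-1)j}(x).$$
   Context: Binomial coefficients: for integers $m\ge 0$ and $j$, $\binom{m}{j}$ is the usual binomial coefficient, with $\binom{m}{j}=0$ if $j<0$ or $j>m$. For an integer $k\ge1$, the generalized Fibonacci polynomials $F^{(k)}_n(x)\in\mathbb{Z}[x]$ ($n\ge0$) are defined by $F^{(k)}_n(x)=x^n$ for $0\le n<k$ and $F^{(k)}_n(x)=xF^{(k)}_{n-1}(x)+F^{(k)}_{n-k}(x)$ for $n\ge k$. *)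

theory Defs
  imports "HOL-Computational_Algebra.Polynomial"
begin

function genFib :: "nat \<Rightarrow> nat \<Rightarrow> int poly" where
  "genFib k n =
     (if k = 0 then 0
      else if n < k then monom 1 n
      else pCons 0 (genFib k (n - 1)) + genFib k (n - k))"
  by auto
termination
  by (relation "measure (\<lambda>(k, n). n)") auto

end

theory Submission
  imports Defs
begin

declare genFib.simps[simp del]

lemma gF_low: "k \<ge> 1 \<Longrightarrow> n < k \<Longrightarrow> genFib k n = [:0,1:] ^ n"
  by (subst genFib.simps) (simp add: monom_altdef)

lemma gF_rec: "k \<ge> 1 \<Longrightarrow> n \<ge> k \<Longrightarrow>
   genFib k n = [:0,1:] * genFib k (n - 1) + genFib k (n - k)"
  by (subst genFib.simps) simp

function hb :: "nat \<Rightarrow> nat \<Rightarrow> int poly" where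
  "hb k d = (if d < k then (if d = 0 then 1 else 0)
             else if k < 2 then 0 else hb k (d - k) - [:0,1:] * hb k (d - k + 1))"
  by auto
termination
  by (relation "measure (\<lambda>(k, d). d)") auto

declare hb.simps[simp del]

definition Fz :: "nat \<Rightarrow> int \<Rightarrow> int poly" where
  "Fz k N = (if 0 \<le> N then genFib k (nat N) else hb k (nat (- N)))"

lemma Fz_rec:
  assumes k: "k \<ge> 1" and N: "k \<ge> 2 \<or> N \<ge> int k"
  shows "Fz k N = [:0,1:] * Fz k (N - 1) + Fz k (N - int k)"
proof -
  consider "N \<ge> int k" | "1 \<le> N \<and> N < int k" | "N = 0" | "N < 0" by linarith
  then show ?thesis
  proof cases
    case 1
    then have "genFib k (nat N) = [:0,1:] * genFib k (nat N - 1) + genFib k (nat N - k)"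
      using k by (intro gF_rec) auto
    moreover have "nat (N - 1) = nat N - 1" "nat (N - int k) = nat N - k" using 1 by auto
    ultimately show ?thesis using 1 k by (simp add: Fz_def)
  next
    case 2
    then have k2: "k \<ge> 2" using N by linarith
    have a: "genFib k (nat N) = [:0,1:] ^ nat N" using 2 k by (intro gF_low) auto
    have b: "genFib k (nat (N - 1)) = [:0,1:] ^ (nat N - 1)" using 2 k
      by (subst gF_low) (auto simp: nat_diff_distrib)
    have c: "hb k (nat (int k - N)) = 0" using 2 by (subst hb.simps) auto
    have d: "[:0,1:] ^ nat N = [:0,1:] * ([:0,1:] :: int poly) ^ (nat N - 1)"
      using 2 by (metis Suc_pred' power_Suc zero_less_nat_eq zero_less_one order_less_le_trans)
    show ?thesis using 2 a b c d by (simp add: Fz_def)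
  next
    case 3
    then have k2: "k \<ge> 2" using N k by linarith
    have a: "genFib k 0 = 1" using k by (subst gF_low) auto
    have b: "hb k 1 = 0" using k2 by (subst hb.simps) auto
    have c: "hb k k = 1" using k2 b by (subst hb.simps) (simp add: hb.simps[of k 0])
    show ?thesis using 3 a b c k2 by (simp add: Fz_def)
  next
    case 4
    then have k2: "k \<ge> 2" using N k by linarith
    define d where "d = nat (- N)"
    have dpos: "d \<ge> 1" using 4 d_def by auto
    have e: "hb k (d + k) = hb k d - [:0,1:] * hb k (d + 1)"
      using k2 by (subst hb.simps) simp
    have f1: "nat (- (N - 1)) = d + 1" "nat (- (N - int k)) = d + k" using 4 d_def by auto
    show ?thesis using 4 e f1 unfolding Fz_def d_def[symmetric] by simp
  qed
qed

lemma pascal_sum: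
  fixes g :: "nat \<Rightarrow> 'a::comm_ring_1"
  shows "(\<Sum>i\<le>Suc m. of_nat (Suc m choose i) * g i)
       = (\<Sum>i\<le>m. of_nat (m choose i) * g (Suc i)) + (\<Sum>i\<le>m. of_nat (m choose i) * g i)"
proof -
  have a: "(\<Sum>i\<le>Suc m. of_nat (Suc m choose i) * g i)
      = g 0 + (\<Sum>i\<le>m. of_nat (Suc m choose Suc i) * g (Suc i))"
    by (subst sum.atMost_Suc_shift) simp
  have b: "(\<Sum>i\<le>m. of_nat (Suc m choose Suc i) * g (Suc i)) = (\<Sum>i\<le>m. of_nat (m choose i) * g (Suc i))
                   + (\<Sum>i\<le>m. of_nat (m choose Suc i) * g (Suc i))"
    by (simp add: sum.distrib algebra_simps)
  have c: "g 0 + (\<Sum>i\<le>m. of_nat (m choose Suc i) * g (Suc i))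
      = (\<Sum>i\<le>Suc m. of_nat (m choose i) * g i)"
    by (subst sum.atMost_Suc_shift) simp
  have d: "(\<Sum>i\<le>Suc m. of_nat (m choose i) * g i) = (\<Sum>i\<le>m. of_nat (m choose i) * g i)"
    by (simp add: binomial_eq_0)
  show ?thesis using a b c d by (simp add: algebra_simps)
qed

lemma lemA:
  assumes k: "k \<ge> 1" and rec: "\<And>N. N \<ge> int k + lo \<Longrightarrow> Fz k N = [:0,1:] * Fz k (N - 1) + Fz k (N - int k)"
  shows "t \<ge> lo \<Longrightarrow> Fz k (int (k * m) + t)
     = (\<Sum>i\<le>m. of_nat (m choose i) * [:0,1:] ^ i * Fz k (int ((k - 1) * i) + t))"
proof (induction m arbitrary: t)
  case 0
  then show ?case by simp
next
  case (Suc m)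
  have r: "Fz k (int (k * Suc m) + t) = [:0,1:] * Fz k (int (k * m) + (t + int (k - 1)))
        + Fz k (int (k * m) + t)"
  proof -
    have A: "Fz k (int (k * Suc m) + t) = [:0,1:] * Fz k (int (k * Suc m) + t - 1)
          + Fz k (int (k * Suc m) + t - int k)"
    proof (rule rec)
      have "int (k * Suc m) = int k + int (k * m)" by simp
      moreover have "0 \<le> int (k * m)" by simp
      ultimately show "int k + lo \<le> int (k * Suc m) + t" using Suc.prems by linarith
    qed
    have e1: "int (k * Suc m) + t - 1 = int (k * m) + (t + int (k - 1))"
    proof -
      have "int (k * Suc m) = int k + int (k * m)" by simp
      moreover have "int (k - 1) = int k - 1" using k by simp
      ultimately show ?thesis by linarith
    qed
    have e2: "int (k * Suc m) + t - int k = int (k * m) + t" by simp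
    show ?thesis using A unfolding e1 e2 .
  qed
  have i1: "Fz k (int (k * m) + (t + int (k - 1)))
     = (\<Sum>i\<le>m. of_nat (m choose i) * [:0,1:] ^ i * Fz k (int ((k - 1) * i) + (t + int (k - 1))))"
    using Suc.prems k by (intro Suc.IH) auto
  have i2: "Fz k (int (k * m) + t)
     = (\<Sum>i\<le>m. of_nat (m choose i) * [:0,1:] ^ i * Fz k (int ((k - 1) * i) + t))"
    using Suc.prems by (intro Suc.IH) auto
  have ps: "(\<Sum>i\<le>Suc m. of_nat (Suc m choose i) * ([:0,1:] ^ i * Fz k (int ((k - 1) * i) + t)))
       = (\<Sum>i\<le>m. of_nat (m choose i) * ([:0,1:] ^ Suc i * Fz k (int ((k - 1) * Suc i) + t)))
       + (\<Sum>i\<le>m. of_nat (m choose i) * ([:0,1:] ^ i * Fz k (int ((k - 1) * i) + t)))"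
    by (rule pascal_sum)
  have eq: "int ((k - 1) * Suc i) + t = int ((k - 1) * i) + (t + int (k - 1))" for i
    by (simp only: mult_Suc_right of_nat_add)
  have s1: "(\<Sum>i\<le>m. of_nat (m choose i) * ([:0,1:] ^ Suc i * Fz k (int ((k - 1) * Suc i) + t)))
      = [:0,1:] * (\<Sum>i\<le>m. of_nat (m choose i) * [:0,1:] ^ i * Fz k (int ((k - 1) * i) + (t + int (k - 1))))"
    unfolding eq sum_distrib_left by (rule sum.cong) (simp_all only: power_Suc mult_ac)
  have a0: "(\<Sum>i\<le>Suc m. of_nat (Suc m choose i) * [:0,1:] ^ i * Fz k (int ((k - 1) * i) + t))
      = (\<Sum>i\<le>Suc m. of_nat (Suc m choose i) * ([:0,1:] ^ i * Fz k (int ((k - 1) * i) + t)))"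
    by (simp only: mult.assoc)
  have a2: "(\<Sum>i\<le>m. of_nat (m choose i) * ([:0,1:] ^ i * Fz k (int ((k - 1) * i) + t)))
      = (\<Sum>i\<le>m. of_nat (m choose i) * [:0,1:] ^ i * Fz k (int ((k - 1) * i) + t))"
    by (simp only: mult.assoc)
  have fin: "(\<Sum>i\<le>Suc m. of_nat (Suc m choose i) * [:0,1:] ^ i * Fz k (int ((k - 1) * i) + t))
     = [:0,1:] * Fz k (int (k * m) + (t + int (k - 1))) + Fz k (int (k * m) + t)"
    unfolding a0 ps s1 a2 i1[symmetric] i2[symmetric] ..
  show ?case unfolding r fin ..
qed

lemma hb_van:
  assumes k2: "k \<ge> 2"
  shows "d \<noteq> 0 \<Longrightarrow> \<not> (\<exists>r s. r \<ge> 1 \<and> d = k * r + (k - 1) * s) \<Longrightarrow> hb k d = 0"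
proof (induction d rule: less_induct)
  case (less d)
  show ?case
  proof (cases "d < k")
    case True
    then show ?thesis using less.prems by (subst hb.simps) auto
  next
    case False
    have a: "hb k (d - k) = 0"
    proof (cases "d - k = 0")
      case True
      then have "d = k * 1 + (k - 1) * 0" using False by simp
      then show ?thesis using less.prems by blast
    next
      case F: False
      show ?thesis
      proof (rule less.IH)
        show "d - k < d" using F k2 by simp
        show "d - k \<noteq> 0" by fact
        show "\<not> (\<exists>r s. r \<ge> 1 \<and> d - k = k * r + (k - 1) * s)"
        proof
          assume "\<exists>r s. r \<ge> 1 \<and> d - k = k * r + (k - 1) * s"
          then obtain r s where "r \<ge> 1" "d - k = k * r + (k - 1) * s" by blast
          then have "d = k * (r + 1) + (k - 1) * s" using False by (simp add: algebra_simps)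
          then show False using less.prems by (metis le_add2)
        qed
      qed
    qed
    have b: "hb k (d - k + 1) = 0"
    proof (rule less.IH)
      show "d - k + 1 < d" using False k2 by simp
      show "d - k + 1 \<noteq> 0" by simp
      show "\<not> (\<exists>r s. r \<ge> 1 \<and> d - k + 1 = k * r + (k - 1) * s)"
      proof
        assume "\<exists>r s. r \<ge> 1 \<and> d - k + 1 = k * r + (k - 1) * s"
        then obtain r s where "r \<ge> 1" "d - k + 1 = k * r + (k - 1) * s" by blast
        moreover obtain j where kj: "k = Suc j" using k2 by (cases k) auto
        ultimately have "d = k * r + (k - 1) * (s + 1)" using False unfolding kj by (simp add: algebra_simps)
        then show False using less.prems \<open>r \<ge> 1\<close> by blast
      qed
    qed
    show ?thesis using False k2 a b by (subst hb.simps) simp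
  qed
qed

lemma nonrep:
  assumes k2: "k \<ge> (2::nat)" and l: "1 \<le> l" "l \<le> k - 1"
  shows "\<not> (\<exists>r s. r \<ge> 1 \<and> (k - 1) * l = k * r + (k - 1) * s)"
proof
  obtain j where kj: "k = Suc j" using k2 by (cases k) auto
  assume "\<exists>r s. r \<ge> 1 \<and> (k - 1) * l = k * r + (k - 1) * s"
  then obtain r s where r: "r \<ge> 1" and e: "j * l = Suc j * r + j * s" unfolding kj by auto
  have e2: "j * (r + s) + r = j * l" using e by (simp add: algebra_simps)
  have "j dvd j * (r + s) + r" unfolding e2 by simp
  then have "j dvd r" by (simp add: dvd_add_right_iff)
  then have "r \<ge> j" using r by (simp add: dvd_imp_le)
  then have "Suc j * r \<ge> Suc j * j" using mult_le_mono2 by blast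
  moreover have "j * l \<le> j * j" using l kj by simp
  moreover have "j * j < Suc j * j" using k2 kj by simp
  ultimately show False using e by linarith
qed

theorem mainTheorem16:
  fixes k n :: nat
  assumes "k \<ge> 1" and "n \<ge> 1"
  shows "(\<Sum>j = 0..n-1. of_nat ((n + k - 2) choose (n - j - 1)) * [:0, 1:] ^ (k + j) * genFib k ((k - 1) * j))
           = [:0, 1:] * genFib k (k * n - 1)
       \<and> [:0, 1:] * genFib k (k * n - 1)
           = (\<Sum>j = 0..n. of_nat ((n - 1) choose (n - j)) * [:0, 1:] ^ j * genFib k ((k - 1) * j))"
proof -
  obtain m where nm: "n = Suc m" using assms(2) by (cases n) auto
  have k: "k \<ge> 1" by fact
  have Fz_nat: "Fz k (int a) = genFib k a" for a by (simp add: Fz_def)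
  have recall: "Fz k N = [:0,1:] * Fz k (N - 1) + Fz k (N - int k)"
    if "N \<ge> int k + t0" "t0 \<le> 0" "k = 1 \<longrightarrow> t0 = 0" for N t0
    using that k by (intro Fz_rec) auto
  have idx: "k * n - 1 = k * m + (k - 1)" using k nm by (cases k) auto
  have A2: "Fz k (int (k * m) + int (k - 1))
     = (\<Sum>i\<le>m. of_nat (m choose i) * [:0,1:] ^ i * Fz k (int ((k - 1) * i) + int (k - 1)))"
  proof -
    have R0: "Fz k N = [:0,1:] * Fz k (N - 1) + Fz k (N - int k)" if "N \<ge> int k + 0" for N
      using that by (intro recall[of 0 N]) auto
    show ?thesis by (rule lemA[where lo=0, OF k]) (use R0 in auto)
  qed
  have A2': "genFib k (k * m + (k - 1))
     = (\<Sum>i\<le>m. of_nat (m choose i) * [:0,1:] ^ i * genFib k ((k - 1) * i + (k - 1)))"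
    using A2 by (simp only: of_nat_add[symmetric] Fz_nat)
  have S2: "(\<Sum>j = 0..n. of_nat ((n - 1) choose (n - j)) * [:0, 1:] ^ j * genFib k ((k - 1) * j))
      = [:0,1:] * (\<Sum>i\<le>m. of_nat (m choose i) * [:0,1:] ^ i * genFib k ((k - 1) * i + (k - 1)))"
  proof -
    have "(\<Sum>j = 0..n. of_nat ((n - 1) choose (n - j)) * [:0, 1:] ^ j * genFib k ((k - 1) * j))
       = (\<Sum>i = 0..m. of_nat (m choose (m - i)) * [:0, 1:] ^ Suc i * genFib k ((k - 1) * Suc i))"
      unfolding nm by (subst sum.atLeast0_atMost_Suc_shift) (simp add: binomial_eq_0)
    also have "\<dots> = (\<Sum>i\<le>m. [:0,1:] * (of_nat (m choose i) * [:0,1:] ^ i * genFib k ((k - 1) * i + (k - 1))))"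
      unfolding atLeast0AtMost
      by (rule sum.cong) (auto simp: binomial_symmetric[symmetric] ac_simps mult_Suc_right)
    finally show ?thesis by (simp add: sum_distrib_left)
  qed
  have second: "[:0, 1:] * genFib k (k * n - 1)
           = (\<Sum>j = 0..n. of_nat ((n - 1) choose (n - j)) * [:0, 1:] ^ j * genFib k ((k - 1) * j))"
    unfolding S2 idx A2' ..
  define M where "M = m + (k - 1)"
  define t where "t = - int ((k - 1) * (k - 1))"
  have A1: "Fz k (int (k * M) + t)
     = (\<Sum>i\<le>M. of_nat (M choose i) * [:0,1:] ^ i * Fz k (int ((k - 1) * i) + t))"
  proof -
    have R1: "Fz k N = [:0,1:] * Fz k (N - 1) + Fz k (N - int k)" if "N \<ge> int k + t" for N
      using that by (intro recall[of t N]) (auto simp: t_def)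
    show ?thesis by (rule lemA[where lo=t, OF k]) (use R1 in auto)
  qed
  have L1: "int (k * M) + t = int (k * m + (k - 1))"
  proof -
    obtain j where kj: "k = Suc j" using k by (cases k) auto
    show ?thesis unfolding kj M_def t_def by (simp add: algebra_simps)
  qed
  have low: "(\<Sum>i\<in>{..<k - 1}. of_nat (M choose i) * [:0,1:] ^ i * Fz k (int ((k - 1) * i) + t)) = 0"
  proof (rule sum.neutral, rule ballI)
    fix i assume i: "i \<in> {..<k - 1}"
    then have k2: "k \<ge> 2" by auto
    have "int ((k - 1) * i) + t = - int ((k - 1) * (k - 1 - i))"
    proof -
      have s: "k - 1 - i + i = k - 1" using i by simp
      have e: "(k - 1) * (k - 1 - i) + (k - 1) * i = (k - 1) * (k - 1)"
        by (metis add_mult_distrib2 s)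
      have "int ((k - 1) * (k - 1 - i)) + int ((k - 1) * i) = int ((k - 1) * (k - 1))"
        using e by (metis of_nat_add)
      then show ?thesis unfolding t_def by linarith
    qed
    moreover have "(k - 1) * (k - 1 - i) > 0" using i by auto
    moreover have "Fz k (- int P) = hb k P" if "P > 0" for P using that by (simp add: Fz_def)
    ultimately have "Fz k (int ((k - 1) * i) + t) = hb k ((k - 1) * (k - 1 - i))"
      by metis
    also have "\<dots> = 0"
      using i k2 by (intro hb_van nonrep) auto
    finally show "of_nat (M choose i) * [:0,1:] ^ i * Fz k (int ((k - 1) * i) + t) = 0" by simp
  qed
  have split: "{..M} = {..<k - 1} \<union> {0 + (k - 1)..m + (k - 1)}" unfolding M_def by auto
  have high: "(\<Sum>i\<in>{0 + (k - 1)..m + (k - 1)}. of_nat (M choose i) * [:0,1:] ^ i * Fz k (int ((k - 1) * i) + t))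
     = (\<Sum>j\<in>{0..m}. of_nat (M choose (m - j)) * [:0,1:] ^ (j + (k - 1)) * genFib k ((k - 1) * j))"
  proof -
    have "(\<Sum>i\<in>{0 + (k - 1)..m + (k - 1)}. of_nat (M choose i) * [:0,1:] ^ i * Fz k (int ((k - 1) * i) + t))
      = (\<Sum>j\<in>{0..m}. of_nat (M choose (j + (k - 1))) * [:0,1:] ^ (j + (k - 1)) * Fz k (int ((k - 1) * (j + (k - 1))) + t))"
      by (rule sum.shift_bounds_cl_nat_ivl)
    also have "\<dots> = (\<Sum>j\<in>{0..m}. of_nat (M choose (m - j)) * [:0,1:] ^ (j + (k - 1)) * genFib k ((k - 1) * j))"
    proof (rule sum.cong)
      fix j assume j: "j \<in> {0..m}"
      have eq1: "int ((k - 1) * (j + (k - 1))) + t = int ((k - 1) * j)"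
        unfolding t_def by (simp add: algebra_simps)
      have eq2: "M choose (j + (k - 1)) = M choose (m - j)"
        using j unfolding M_def by (subst binomial_symmetric) auto
      show "of_nat (M choose (j + (k - 1))) * [:0,1:] ^ (j + (k - 1)) * Fz k (int ((k - 1) * (j + (k - 1))) + t)
        = of_nat (M choose (m - j)) * [:0,1:] ^ (j + (k - 1)) * genFib k ((k - 1) * j)"
        by (simp only: eq1 eq2 Fz_nat)
    qed simp
    finally show ?thesis .
  qed
  have disj: "{..<k - 1} \<inter> {0 + (k - 1)..m + (k - 1)} = {}" by auto
  have G1: "genFib k (k * m + (k - 1))
     = (\<Sum>j\<in>{0..m}. of_nat (M choose (m - j)) * [:0,1:] ^ (j + (k - 1)) * genFib k ((k - 1) * j))"
    using A1 unfolding L1 Fz_nat split sum.union_disjoint[OF finite_lessThan finite_atLeastAtMost disj] low high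
    by simp
  have first: "(\<Sum>j = 0..n-1. of_nat ((n + k - 2) choose (n - j - 1)) * [:0, 1:] ^ (k + j) * genFib k ((k - 1) * j))
           = [:0, 1:] * genFib k (k * n - 1)"
  proof -
    have hM: "n + k - 2 = M" and hm: "n - 1 = m" unfolding M_def nm using k by auto
    have hj: "n - j - 1 = m - j" for j unfolding nm by simp
    have pw: "([:0,1:] :: int poly) ^ (k + j) = [:0,1:] * [:0,1:] ^ (j + (k - 1))" for j
    proof -
      have "k + j = Suc (j + (k - 1))" using k by simp
      then show ?thesis by (simp only: power_Suc)
    qed
    have "(\<Sum>j = 0..n-1. of_nat ((n + k - 2) choose (n - j - 1)) * [:0, 1:] ^ (k + j) * genFib k ((k - 1) * j))
      = (\<Sum>j = 0..m. [:0,1:] * (of_nat (M choose (m - j)) * [:0, 1:] ^ (j + (k - 1)) * genFib k ((k - 1) * j)))"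
      unfolding hm by (rule sum.cong) (simp_all only: hM hj pw mult_ac)
    also have "\<dots> = [:0,1:] * genFib k (k * n - 1)"
      unfolding idx G1 by (simp add: sum_distrib_left)
    finally show ?thesis .
  qed
  show ?thesis using first second by blast
qed

end
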